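(* Let $a\le s\le r$ be positive integers with $s\mid r$, and let $\gamma\in B_a$ (viewed in $B_s\subseteq B_r$ via the standard inclusions). Then $\widehat{\gamma[1,r]^s}=\widehat{\gamma[1,s]^r}$, where the left closure is taken in $B_r$ and the right in $B_s$. Consequently, for a T-link with $r_{k-1}\le s_k\le r_k$ and $s_k\mid r_k$, $$T((r_1,s_1),\dots,(r_{k-1},s_{k-1}),(r_k,s_k))=T((r_1,s_1),\dots,(r_{k-1},s_{k-1}),(s_k,r_k)).$$
   Context: $B_n$ is the braid group on $n$ strands with generators $\sigma_1,\dots,\sigma_{n-1}$; $\widehat\beta$ is the closure; $[1,n]=\sigma_1\sigma_2\cdots\sigma_{n-1}$. A T-link $T((r_1,s_1),\dots,(r_k,s_k))$, with integers $2\le r_1\le\dots\le r_k$ and $s_i>0$, is the closure of $[1,r_1]^{s_1}\cdots[1,r_k]^{s_k}\in B_{r_k}$. *)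

theory Defs
  imports Main
begin

text \<open>Braid words: (i, True) is the generator sigma_i, (i, False) its inverse (i \<ge> 1).\<close>
type_synonym bword = "(nat \<times> bool) list"

definition valid_word :: "nat \<Rightarrow> bword \<Rightarrow> bool" where
  "valid_word n w \<longleftrightarrow> (\<forall>(i, b) \<in> set w. 1 \<le> i \<and> i < n)"

definition inv_word :: "bword \<Rightarrow> bword" where
  "inv_word w = rev (map (\<lambda>(i, b). (i, \<not> b)) w)"

inductive braid_eq :: "nat \<Rightarrow> bword \<Rightarrow> bword \<Rightarrow> bool" for n :: nat where
  refl: "valid_word n w \<Longrightarrow> braid_eq n w w"
| sym: "braid_eq n w v \<Longrightarrow> braid_eq n v w"
| trans: "braid_eq n u v \<Longrightarrow> braid_eq n v w \<Longrightarrow> braid_eq n u w"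
| cancel: "valid_word n u \<Longrightarrow> valid_word n v \<Longrightarrow> 1 \<le> i \<Longrightarrow> i < n \<Longrightarrow>
     braid_eq n (u @ [(i, b), (i, \<not> b)] @ v) (u @ v)"
| far_comm: "valid_word n u \<Longrightarrow> valid_word n v \<Longrightarrow> 1 \<le> i \<Longrightarrow> i + 2 \<le> j \<Longrightarrow> j < n \<Longrightarrow>
     braid_eq n (u @ [(i, True), (j, True)] @ v) (u @ [(j, True), (i, True)] @ v)"
| braid_rel: "valid_word n u \<Longrightarrow> valid_word n v \<Longrightarrow> 1 \<le> i \<Longrightarrow> i + 1 < n \<Longrightarrow>
     braid_eq n (u @ [(i, True), (Suc i, True), (i, True)] @ v)
                (u @ [(Suc i, True), (i, True), (Suc i, True)] @ v)"

text \<open>Markov equivalence of braids (n strands, word): equality of braid closures as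
  oriented links (Markov's theorem). Generated by braid-group equality, conjugation
  and (de)stabilisation.\<close>
inductive markov_eq :: "nat \<times> bword \<Rightarrow> nat \<times> bword \<Rightarrow> bool" where
  group: "braid_eq n w v \<Longrightarrow> markov_eq (n, w) (n, v)"
| conj: "valid_word n w \<Longrightarrow> valid_word n g \<Longrightarrow> markov_eq (n, w) (n, g @ w @ inv_word g)"
| stab: "1 \<le> n \<Longrightarrow> valid_word n w \<Longrightarrow> markov_eq (n, w) (Suc n, w @ [(n, b)])"
| sym: "markov_eq x y \<Longrightarrow> markov_eq y x"
| trans: "markov_eq x y \<Longrightarrow> markov_eq y z \<Longrightarrow> markov_eq x z"

text \<open>The closure of a braid in B_n, represented by its link type (Markov class).\<close>
definition closure :: "nat \<Rightarrow> bword \<Rightarrow> (nat \<times> bword) set" where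
  "closure n w = {x. markov_eq (n, w) x}"

text \<open>[1,n] = sigma_1 sigma_2 ... sigma_(n-1)\<close>
definition full_word :: "nat \<Rightarrow> bword" where
  "full_word n = map (\<lambda>i. (i, True)) [1..<n]"

definition pow_word :: "bword \<Rightarrow> nat \<Rightarrow> bword" where
  "pow_word w k = concat (replicate k w)"

definition is_T_data :: "(nat \<times> nat) list \<Rightarrow> bool" where
  "is_T_data ps \<longleftrightarrow> ps \<noteq> [] \<and> sorted (map fst ps) \<and> (\<forall>(r, s) \<in> set ps. 2 \<le> r \<and> 0 < s)"

definition T_link :: "(nat \<times> nat) list \<Rightarrow> (nat \<times> bword) set" where
  "T_link ps = closure (fst (last ps)) (concat (map (\<lambda>(r, s). pow_word (full_word r) s) ps))"

end

theory Submission
  imports Defs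
begin


lemma valid_Nil[simp]: "valid_word n []" by (simp add: valid_word_def)
lemma valid_append[simp]: "valid_word n (u @ v) \<longleftrightarrow> valid_word n u \<and> valid_word n v"
  by (auto simp: valid_word_def)
lemma valid_Cons[simp]: "valid_word n ((i,b) # v) \<longleftrightarrow> 1 \<le> i \<and> i < n \<and> valid_word n v"
  by (auto simp: valid_word_def)
lemma valid_rev[simp]: "valid_word n (rev v) = valid_word n v"
  by (auto simp: valid_word_def)
lemma valid_mono: "valid_word n w \<Longrightarrow> n \<le> m \<Longrightarrow> valid_word m w"
  by (auto simp: valid_word_def)
lemma valid_concat: "(\<forall>w\<in>set ws. valid_word n w) \<Longrightarrow> valid_word n (concat ws)"
  by (induction ws) auto
lemma valid_pow: "valid_word n w \<Longrightarrow> valid_word n (pow_word w k)"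
  unfolding pow_word_def by (rule valid_concat) auto

lemma be_valid: "braid_eq n w v \<Longrightarrow> valid_word n w \<and> valid_word n v"
  by (induction rule: braid_eq.induct) auto

lemma be_cong: "braid_eq n w v \<Longrightarrow> valid_word n x \<Longrightarrow> valid_word n y \<Longrightarrow> braid_eq n (x @ w @ y) (x @ v @ y)"
proof (induction rule: braid_eq.induct)
  case (refl w) then show ?case by (intro braid_eq.refl) simp
next
  case (sym w v) then show ?case by (blast intro: braid_eq.sym)
next
  case (trans u v w) then show ?case by (blast intro: braid_eq.trans)
next
  case (cancel u v i b)
  have "braid_eq n ((x@u) @ [(i, b), (i, \<not> b)] @ (v@y)) ((x@u) @ (v@y))"
    using cancel by (intro braid_eq.cancel) auto
  then show ?case by simp
next
  case (far_comm u v i j)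
  have "braid_eq n ((x@u) @ [(i, True), (j, True)] @ (v@y)) ((x@u) @ [(j, True), (i, True)] @ (v@y))"
    using far_comm by (intro braid_eq.far_comm) auto
  then show ?case by simp
next
  case (braid_rel u v i)
  have "braid_eq n ((x@u) @ [(i, True), (Suc i, True), (i, True)] @ (v@y)) ((x@u) @ [(Suc i, True), (i, True), (Suc i, True)] @ (v@y))"
    using braid_rel by (intro braid_eq.braid_rel) auto
  then show ?case by simp
qed

lemma be_left: "braid_eq n w v \<Longrightarrow> valid_word n x \<Longrightarrow> braid_eq n (x @ w) (x @ v)"
  using be_cong[of n w v x "[]"] by simp
lemma be_right: "braid_eq n w v \<Longrightarrow> valid_word n y \<Longrightarrow> braid_eq n (w @ y) (v @ y)"
  using be_cong[of n w v "[]" y] by simp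
lemma be_app: "braid_eq n w v \<Longrightarrow> braid_eq n w' v' \<Longrightarrow> braid_eq n (w @ w') (v @ v')"
  by (meson be_left be_right be_valid braid_eq.trans)

lemma be_mono: "braid_eq n w v \<Longrightarrow> n \<le> m \<Longrightarrow> braid_eq m w v"
proof (induction rule: braid_eq.induct)
  case (refl w) then show ?case using valid_mono braid_eq.refl by blast
next
  case (sym w v) then show ?case by (blast intro: braid_eq.sym)
next
  case (trans u v w) then show ?case by (blast intro: braid_eq.trans)
next
  case (cancel u v i b) then show ?case by (intro braid_eq.cancel) (auto intro: valid_mono)
next
  case (far_comm u v i j) then show ?case by (intro braid_eq.far_comm) (auto intro: valid_mono)
next
  case (braid_rel u v i) then show ?case by (intro braid_eq.braid_rel) (auto intro: valid_mono)
qed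

lemma be_rev: "braid_eq n w v \<Longrightarrow> braid_eq n (rev w) (rev v)"
proof (induction rule: braid_eq.induct)
  case (refl w) then show ?case by (intro braid_eq.refl) simp
next
  case (sym w v) then show ?case by (blast intro: braid_eq.sym)
next
  case (trans u v w) then show ?case by (blast intro: braid_eq.trans)
next
  case (cancel u v i b)
  have "braid_eq n (rev v @ [(i, \<not> b), (i, \<not> \<not> b)] @ rev u) (rev v @ rev u)"
    using cancel by (intro braid_eq.cancel) auto
  then show ?case by simp
next
  case (far_comm u v i j)
  have "braid_eq n (rev v @ [(i, True), (j, True)] @ rev u) (rev v @ [(j, True), (i, True)] @ rev u)"
    using far_comm by (intro braid_eq.far_comm) auto
  then show ?case by (simp add: braid_eq.sym)
next
  case (braid_rel u v i)
  have "braid_eq n (rev v @ [(i, True), (Suc i, True), (i, True)] @ rev u) (rev v @ [(Suc i, True), (i, True), (Suc i, True)] @ rev u)"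
    using braid_rel by (intro braid_eq.braid_rel) auto
  then show ?case by simp
qed

lemma be_pow: "braid_eq n w v \<Longrightarrow> braid_eq n (pow_word w k) (pow_word v k)"
proof (induction k)
  case 0 then show ?case by (simp add: pow_word_def braid_eq.refl)
next
  case (Suc k) then show ?case by (simp add: pow_word_def be_app)
qed

lemma markov_closure: "markov_eq (n,w) (m,v) \<Longrightarrow> closure n w = closure m v"
  unfolding closure_def by (auto intro: markov_eq.trans markov_eq.sym)

lemma inv_cancel: "valid_word n g \<Longrightarrow> valid_word n x \<Longrightarrow> valid_word n y \<Longrightarrow>
   braid_eq n (x @ g @ inv_word g @ y) (x @ y)"
proof (induction g arbitrary: x y)
  case Nil then show ?case by (simp add: braid_eq.refl inv_word_def)
next
  case (Cons c g)
  obtain i b where c: "c = (i,b)" by fastforce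
  have iv: "inv_word (c # g) = inv_word g @ [(i, \<not> b)]" by (simp add: inv_word_def c)
  have "braid_eq n ((x @ [c]) @ g @ inv_word g @ ((i, \<not> b) # y)) ((x @ [c]) @ ((i, \<not> b) # y))"
    using Cons c by (intro Cons.IH) auto
  moreover have "braid_eq n (x @ [(i,b), (i, \<not> b)] @ y) (x @ y)"
    using Cons c by (intro braid_eq.cancel) auto
  ultimately show ?case using iv c by (auto intro: braid_eq.trans)
qed

lemma closure_be: "braid_eq n w v \<Longrightarrow> closure n w = closure n v"
  by (intro markov_closure markov_eq.group)

lemma closure_cyc: "valid_word n u \<Longrightarrow> valid_word n v \<Longrightarrow> closure n (u @ v) = closure n (v @ u)"
proof -
  assume u: "valid_word n u" and v: "valid_word n v"
  have "markov_eq (n, u @ v) (n, v @ (u @ v) @ inv_word v)"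
    using u v by (intro markov_eq.conj) auto
  moreover have "braid_eq n ((v @ u) @ v @ inv_word v @ []) ((v @ u) @ [])"
    using u v by (intro inv_cancel) auto
  ultimately have "markov_eq (n, u @ v) (n, v @ u)"
    by (auto intro: markov_eq.trans markov_eq.group)
  then show ?thesis by (rule markov_closure)
qed

lemma closure_destab: "1 \<le> n \<Longrightarrow> valid_word n w \<Longrightarrow> closure (Suc n) (w @ [(n, True)]) = closure n w"
  by (metis markov_closure markov_eq.stab markov_eq.sym)




definition pos :: "nat list \<Rightarrow> bword" where "pos xs = map (\<lambda>j. (j, True)) xs"
definition asc :: "nat \<Rightarrow> nat \<Rightarrow> bword" where "asc a b = pos [a..<b]"
definition dsc :: "nat \<Rightarrow> nat \<Rightarrow> bword" where "dsc a b = rev (asc a b)"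

lemma pos_simps[simp]: "pos [] = []" "pos (i # xs) = (i,True) # pos xs" "pos (xs @ ys) = pos xs @ pos ys"
  "rev (pos xs) = pos (rev xs)"
  by (simp_all add: pos_def rev_map)

lemma valid_pos[simp]: "valid_word n (pos xs) \<longleftrightarrow> (\<forall>i\<in>set xs. 1 \<le> i \<and> i < n)"
  by (induction xs) auto

lemma valid_asc: "1 \<le> a \<Longrightarrow> b \<le> n \<Longrightarrow> valid_word n (asc a b)"
  by (auto simp: asc_def)
lemma valid_dsc: "1 \<le> a \<Longrightarrow> b \<le> n \<Longrightarrow> valid_word n (dsc a b)"
  by (auto simp: dsc_def asc_def)

lemma asc_split: "a \<le> b \<Longrightarrow> b \<le> c \<Longrightarrow> asc a c = asc a b @ asc b c"
  using upt_add_eq_append[of a b "c - b"] by (simp add: asc_def)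
lemma dsc_split: "a \<le> b \<Longrightarrow> b \<le> c \<Longrightarrow> dsc a c = dsc b c @ dsc a b"
  using asc_split[of a b c] by (simp add: dsc_def)
lemma asc_Suc: "a \<le> b \<Longrightarrow> asc a (Suc b) = asc a b @ [(b,True)]"
  by (simp add: asc_def)
lemma dsc_Suc: "a \<le> b \<Longrightarrow> dsc a (Suc b) = (b,True) # dsc a b"
  by (simp add: dsc_def asc_Suc)
lemma asc_empty[simp]: "asc a a = []" and dsc_empty[simp]: "dsc a a = []"
  by (simp_all add: asc_def dsc_def)
lemma asc_pos: "asc a b = pos [a..<b]" by (simp add: asc_def)
lemma dsc_pos: "dsc a b = pos (rev [a..<b])" by (simp add: asc_def dsc_def)

lemma comm1:
  assumes "1 \<le> i" "i < n" "\<forall>j\<in>set js. 1 \<le> j \<and> j < n \<and> (i + 2 \<le> j \<or> j + 2 \<le> i)"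
  shows "braid_eq n ((i,True) # pos js) (pos js @ [(i,True)])"
  using assms
proof (induction js)
  case Nil then show ?case by (simp add: braid_eq.refl)
next
  case (Cons j js)
  have 1: "braid_eq n ([] @ [(i,True),(j,True)] @ pos js) ([] @ [(j,True),(i,True)] @ pos js)"
  proof (cases "i + 2 \<le> j")
    case True then show ?thesis using Cons.prems by (intro braid_eq.far_comm) auto
  next
    case False
    have "braid_eq n ([] @ [(j,True),(i,True)] @ pos js) ([] @ [(i,True),(j,True)] @ pos js)"
      using False Cons.prems by (intro braid_eq.far_comm) auto
    then show ?thesis by (rule braid_eq.sym)
  qed
  have 2: "braid_eq n ([(j,True)] @ ((i,True) # pos js)) ([(j,True)] @ (pos js @ [(i,True)]))"
    using Cons by (intro be_left) auto
  from 1 2 show ?case by (auto intro: braid_eq.trans)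
qed

lemma comm_words:
  assumes "\<forall>i\<in>set xs. 1 \<le> i \<and> i < n" "\<forall>j\<in>set js. 1 \<le> j \<and> j < n"
     "\<forall>i\<in>set xs. \<forall>j\<in>set js. i + 2 \<le> j \<or> j + 2 \<le> i"
  shows "braid_eq n (pos xs @ pos js) (pos js @ pos xs)"
  using assms
proof (induction xs)
  case Nil then show ?case by (simp add: braid_eq.refl)
next
  case (Cons i xs)
  have 1: "braid_eq n ([(i,True)] @ (pos xs @ pos js)) ([(i,True)] @ (pos js @ pos xs))"
    using Cons by (intro be_left) auto
  have 2: "braid_eq n (((i,True) # pos js) @ pos xs) ((pos js @ [(i,True)]) @ pos xs)"
    using Cons.prems by (intro be_right comm1) auto
  from 1 2 show ?case by (auto intro: braid_eq.trans)
qed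




declare braid_eq.trans[trans]

lemma I2:
  assumes "1 \<le> b" "b \<le> e"
  shows "braid_eq (Suc e) (dsc (Suc b) (Suc e) @ asc b (Suc e)) (asc b e @ dsc b (Suc e))"
  using assms(2)
proof (induction e rule: dec_induct)
  case base
  have "dsc (Suc b) (Suc b) @ asc b (Suc b) = [(b,True)]" "asc b b @ dsc b (Suc b) = [(b,True)]"
    by (simp_all add: asc_Suc dsc_Suc)
  then show ?case using assms by (simp add: braid_eq.refl)
next
  case (step e)
  let ?c = "Suc e"
  have eq1: "dsc (Suc b) (Suc ?c) @ asc b (Suc ?c) = [(?c,True)] @ (dsc (Suc b) ?c @ asc b ?c) @ [(?c,True)]"
    using step.hyps by (simp add: dsc_Suc asc_Suc)
  have "braid_eq (Suc ?c) ([(?c,True)] @ (dsc (Suc b) ?c @ asc b ?c) @ [(?c,True)])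
                          ([(?c,True)] @ (asc b e @ dsc b ?c) @ [(?c,True)])"
    using be_mono[OF step.IH, of "Suc ?c"] by (intro be_cong) auto
  also have "[(?c,True)] @ (asc b e @ dsc b ?c) @ [(?c,True)]
     = ((?c,True) # pos [b..<e]) @ [(e,True)] @ (pos (rev [b..<e]) @ [(?c,True)])"
    using step.hyps by (simp add: dsc_Suc asc_pos dsc_pos)
  also have "braid_eq (Suc ?c) \<dots> ((pos [b..<e] @ [(?c,True)]) @ [(e,True)] @ (pos (rev [b..<e]) @ [(?c,True)]))"
    using assms step.hyps by (intro be_right comm1) auto
  also have "braid_eq (Suc ?c) \<dots> ((pos [b..<e] @ [(?c,True)]) @ [(e,True)] @ ([(?c,True)] @ pos (rev [b..<e])))"
  proof -
    have "braid_eq (Suc ?c) ((?c,True) # pos (rev [b..<e])) (pos (rev [b..<e]) @ [(?c,True)])"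
      using assms step.hyps by (intro comm1) auto
    then show ?thesis using assms step.hyps by (intro be_left) (auto intro: braid_eq.sym)
  qed
  also have "(pos [b..<e] @ [(?c,True)]) @ [(e,True)] @ ([(?c,True)] @ pos (rev [b..<e]))
      = pos [b..<e] @ [(Suc e,True), (e,True), (Suc e,True)] @ pos (rev [b..<e])" by simp
  also have "braid_eq (Suc ?c) \<dots> (pos [b..<e] @ [(e,True), (Suc e,True), (e,True)] @ pos (rev [b..<e]))"
  proof -
    have "braid_eq (Suc ?c) (pos [b..<e] @ [(e,True), (Suc e,True), (e,True)] @ pos (rev [b..<e]))
              (pos [b..<e] @ [(Suc e,True), (e,True), (Suc e,True)] @ pos (rev [b..<e]))"
      using assms step.hyps by (intro braid_eq.braid_rel) auto
    then show ?thesis by (rule braid_eq.sym)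
  qed
  also have "pos [b..<e] @ [(e,True), (Suc e,True), (e,True)] @ pos (rev [b..<e]) = asc b ?c @ dsc b (Suc ?c)"
    using step.hyps by (simp add: asc_Suc dsc_Suc asc_pos dsc_pos)
  finally show ?case using eq1 by simp
qed

lemma I1:
  assumes "2 \<le> a" "a \<le> n"
  shows "braid_eq n (dsc a n @ asc 1 n) (asc 1 (n - 1) @ dsc (a - 1) n)"
proof -
  have s1: "asc 1 n = asc 1 (a - 1) @ asc (a - 1) n" using assms by (intro asc_split) auto
  have s2: "asc 1 (n - 1) = asc 1 (a - 1) @ asc (a - 1) (n - 1)" using assms by (intro asc_split) auto
  have "dsc a n @ asc 1 n = (dsc a n @ asc 1 (a - 1)) @ asc (a - 1) n" using s1 by simp
  also have "braid_eq n \<dots> ((asc 1 (a - 1) @ dsc a n) @ asc (a - 1) n)"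
    using assms unfolding asc_pos dsc_pos by (intro be_right comm_words) auto
  also have "braid_eq n \<dots> (asc 1 (a - 1) @ (asc (a - 1) (n - 1) @ dsc (a - 1) n))"
  proof -
    have "braid_eq (Suc (n - 1)) (dsc (Suc (a - 1)) (Suc (n - 1)) @ asc (a - 1) (Suc (n - 1)))
              (asc (a - 1) (n - 1) @ dsc (a - 1) (Suc (n - 1)))"
      using assms by (intro I2) auto
    moreover have "Suc (n - 1) = n" "Suc (a - 1) = a" using assms by auto
    ultimately show ?thesis using assms by (simp add: be_left valid_asc)
  qed
  also have "asc 1 (a - 1) @ (asc (a - 1) (n - 1) @ dsc (a - 1) n) = asc 1 (n - 1) @ dsc (a - 1) n"
    using s2 by simp
  finally show ?thesis .
qed

lemma pow_Suc1: "pow_word w (Suc k) = w @ pow_word w k" by (simp add: pow_word_def)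
lemma pow_Suc2: "pow_word w (Suc k) = pow_word w k @ w"
  by (induction k) (simp_all add: pow_word_def)
lemma pow_0[simp]: "pow_word w 0 = []" by (simp add: pow_word_def)
lemma pow_add: "pow_word w (a + b) = pow_word w a @ pow_word w b"
  by (simp add: pow_word_def replicate_add)
lemma pow_mult: "pow_word w (a * b) = pow_word (pow_word w a) b"
  by (induction b) (simp_all add: pow_add pow_Suc1)
lemma pow_Nil[simp]: "pow_word [] k = []" by (simp add: pow_word_def)
lemma rev_pow: "rev (pow_word w k) = pow_word (rev w) k"
  by (induction k) (simp_all add: pow_Suc1, metis pow_Suc1 pow_Suc2)

lemma lemA:
  assumes "t + 1 \<le> n"
  shows "braid_eq n (pow_word (asc 1 n) t) (pow_word (asc 1 (n - 1)) t @ dsc (n - t) n)"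
  using assms
proof (induction t)
  case 0 then show ?case by (simp add: braid_eq.refl)
next
  case (Suc t)
  have "pow_word (asc 1 n) (Suc t) = pow_word (asc 1 n) t @ asc 1 n" by (simp add: pow_Suc2)
  also have "braid_eq n \<dots> ((pow_word (asc 1 (n - 1)) t @ dsc (n - t) n) @ asc 1 n)"
    using Suc by (intro be_right) (auto intro: valid_asc)
  also have "braid_eq n \<dots> (pow_word (asc 1 (n - 1)) t @ (asc 1 (n - 1) @ dsc (n - t - 1) n))"
  proof -
    have "braid_eq n (dsc (n - t) n @ asc 1 n) (asc 1 (n - 1) @ dsc (n - t - 1) n)"
      using I1[of "n - t" n] Suc.prems by simp
    then show ?thesis by (simp add: be_left valid_pow valid_asc)
  qed
  also have "\<dots> = pow_word (asc 1 (n - 1)) (Suc t) @ dsc (n - Suc t) n" by (simp add: pow_Suc2)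
  finally show ?case .
qed

definition Eb :: "nat \<Rightarrow> nat \<Rightarrow> bword" where
  "Eb s n = concat (map (\<lambda>k. dsc (k - s) k) [Suc s..<Suc n])"

lemma Eb_base[simp]: "Eb s s = []" by (simp add: Eb_def)
lemma Eb_Suc: "s \<le> n \<Longrightarrow> Eb s (Suc n) = Eb s n @ dsc (Suc n - s) (Suc n)"
  by (simp add: Eb_def)
lemma valid_Eb: "1 \<le> s \<Longrightarrow> n \<le> m \<Longrightarrow> valid_word m (Eb s n)"
  unfolding Eb_def by (intro valid_concat) (auto intro!: valid_dsc)

lemma lemE:
  assumes "1 \<le> s" "s \<le> n"
  shows "braid_eq n (pow_word (asc 1 n) s) (pow_word (asc 1 s) s @ Eb s n)"
  using assms(2)
proof (induction n rule: dec_induct)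
  case base then show ?case by (simp add: braid_eq.refl valid_pow valid_asc)
next
  case (step n)
  have "braid_eq (Suc n) (pow_word (asc 1 (Suc n)) s) (pow_word (asc 1 n) s @ dsc (Suc n - s) (Suc n))"
    using lemA[of s "Suc n"] step by simp
  also have "braid_eq (Suc n) \<dots> ((pow_word (asc 1 s) s @ Eb s n) @ dsc (Suc n - s) (Suc n))"
    using step assms by (intro be_right be_mono[OF step.IH]) (auto intro: valid_dsc)
  finally show ?case using step by (simp add: Eb_Suc)
qed

lemma G1:
  assumes "1 \<le> a" "a \<le> i" "i + 2 \<le> c" "c \<le> n"
  shows "braid_eq n ((i,True) # dsc a c) (dsc a c @ [(Suc i, True)])"
proof -
  have d: "dsc a c = dsc (i+2) c @ [(Suc i,True),(i,True)] @ dsc a i"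
    using assms dsc_split[of a "i+2" c] by (simp add: dsc_Suc)
  have "(i,True) # dsc a c = ((i,True) # pos (rev [i+2..<c])) @ [(Suc i,True),(i,True)] @ dsc a i"
    using d by (simp add: dsc_pos)
  also have "braid_eq n \<dots> ((pos (rev [i+2..<c]) @ [(i,True)]) @ [(Suc i,True),(i,True)] @ dsc a i)"
    using assms by (intro be_right comm1) (auto intro: valid_dsc)
  also have "\<dots> = pos (rev [i+2..<c]) @ [(i,True),(Suc i,True),(i,True)] @ dsc a i" by simp
  also have "braid_eq n \<dots> (pos (rev [i+2..<c]) @ [(Suc i,True),(i,True),(Suc i,True)] @ dsc a i)"
    using assms by (intro braid_eq.braid_rel) (auto intro: valid_dsc)
  also have "\<dots> = (pos (rev [i+2..<c]) @ [(Suc i,True),(i,True)]) @ ((Suc i,True) # pos (rev [a..<i]))"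
    by (simp add: dsc_pos)
  also have "braid_eq n \<dots> ((pos (rev [i+2..<c]) @ [(Suc i,True),(i,True)]) @ (pos (rev [a..<i]) @ [(Suc i,True)]))"
    using assms by (intro be_left comm1) auto
  also have "\<dots> = dsc a c @ [(Suc i, True)]" using d by (simp add: dsc_pos)
  finally show ?thesis .
qed

lemma G:
  assumes "1 \<le> a" "\<forall>i\<in>set xs. a \<le> i \<and> i + 2 \<le> c" "c \<le> n"
  shows "braid_eq n (pos xs @ dsc a c) (dsc a c @ pos (map Suc xs))"
  using assms
proof (induction xs)
  case Nil then show ?case by (simp add: braid_eq.refl valid_dsc)
next
  case (Cons i xs)
  have "pos (i # xs) @ dsc a c = [(i,True)] @ (pos xs @ dsc a c)" by simp
  also have "braid_eq n \<dots> ([(i,True)] @ (dsc a c @ pos (map Suc xs)))"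
    using Cons by (intro be_left) auto
  also have "\<dots> = ((i,True) # dsc a c) @ pos (map Suc xs)" by simp
  also have "braid_eq n \<dots> ((dsc a c @ [(Suc i, True)]) @ pos (map Suc xs))"
    using Cons.prems by (intro be_right G1) auto
  finally show ?case by simp
qed

lemma lemN:
  assumes "1 \<le> s" "s \<le> k"
  shows "braid_eq k (dsc 1 s @ Eb s k) (Eb s k @ dsc (Suc k - s) k)"
  using assms(2)
proof (induction k rule: dec_induct)
  case base
  have "Suc s - s = 1" by simp
  then show ?case using assms by (simp add: braid_eq.refl valid_dsc)
next
  case (step k)
  have "dsc 1 s @ Eb s (Suc k) = (dsc 1 s @ Eb s k) @ dsc (Suc k - s) (Suc k)"
    using step by (simp add: Eb_Suc)
  also have "braid_eq (Suc k) \<dots> ((Eb s k @ dsc (Suc k - s) k) @ dsc (Suc k - s) (Suc k))"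
    using step assms by (intro be_right be_mono[OF step.IH]) (auto intro: valid_dsc)
  also have "braid_eq (Suc k) \<dots> (Eb s k @ (dsc (Suc k - s) (Suc k) @ pos (map Suc (rev [Suc k - s..<k]))))"
  proof -
    have "braid_eq (Suc k) (pos (rev [Suc k - s..<k]) @ dsc (Suc k - s) (Suc k))
        (dsc (Suc k - s) (Suc k) @ pos (map Suc (rev [Suc k - s..<k])))"
      using assms step by (intro G) auto
    then show ?thesis using assms by (simp add: dsc_pos be_left valid_Eb)
  qed
  also have "pos (map Suc (rev [Suc k - s..<k])) = dsc (Suc (Suc k) - s) (Suc k)"
    using assms step by (simp add: dsc_pos rev_map[symmetric] map_Suc_upt Suc_diff_le)
  finally show ?case using step by (simp add: Eb_Suc)
qed




lemma lemLS:
  assumes "1 \<le> s" "s \<le> n" "valid_word s \<beta>"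
  shows "closure n (\<beta> @ Eb s n) = closure s (\<beta> @ pow_word (dsc 1 s) (n - s))"
  using assms(2,3)
proof (induction n arbitrary: \<beta> rule: dec_induct)
  case base then show ?case by simp
next
  case (step n)
  let ?Q = "dsc (Suc n - s) n"
  have vb: "valid_word n \<beta>" using step valid_mono by blast
  have vQ: "valid_word n ?Q" using assms(1) step.hyps by (intro valid_dsc) auto
  have vE: "valid_word n (Eb s n)" using assms by (intro valid_Eb) auto
  have n1: "1 \<le> n" using assms step by auto
  have "Eb s (Suc n) = Eb s n @ [(n,True)] @ ?Q"
    using step assms by (simp add: Eb_Suc dsc_Suc)
  then have "closure (Suc n) (\<beta> @ Eb s (Suc n)) = closure (Suc n) ((\<beta> @ Eb s n @ [(n,True)]) @ ?Q)"
    by simp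
  also have "\<dots> = closure (Suc n) (?Q @ (\<beta> @ Eb s n @ [(n,True)]))"
    using vb vQ vE n1 by (intro closure_cyc) (auto intro: valid_mono)
  also have "\<dots> = closure (Suc n) ((?Q @ \<beta> @ Eb s n) @ [(n,True)])" by simp
  also have "\<dots> = closure n (?Q @ \<beta> @ Eb s n)"
    using vb vQ vE n1 by (intro closure_destab) auto
  also have "\<dots> = closure n ((\<beta> @ Eb s n) @ ?Q)"
    using vb vQ vE by (subst closure_cyc) auto
  also have "\<dots> = closure n (\<beta> @ (dsc 1 s @ Eb s n))"
  proof -
    have "braid_eq n (dsc 1 s @ Eb s n) (Eb s n @ ?Q)" using lemN[of s n] assms step by simp
    then have "braid_eq n (\<beta> @ (Eb s n @ ?Q)) (\<beta> @ (dsc 1 s @ Eb s n))"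
      using vb braid_eq.sym by (intro be_left) blast+
    then show ?thesis by (simp add: closure_be)
  qed
  also have "\<dots> = closure s ((\<beta> @ dsc 1 s) @ pow_word (dsc 1 s) (n - s))"
    using step.IH[of "\<beta> @ dsc 1 s"] step assms by (simp add: valid_dsc)
  also have "\<dots> = closure s (\<beta> @ pow_word (dsc 1 s) (Suc n - s))"
    using step by (simp add: Suc_diff_le pow_Suc1)
  finally show ?case .
qed

lemma rev_asc[simp]: "rev (asc a b) = dsc a b" by (simp add: dsc_def)
lemma rev_dsc[simp]: "rev (dsc a b) = asc a b" by (simp add: dsc_def del: rev_asc)

lemma lemRF:
  assumes "1 \<le> n"
  shows "braid_eq n (pow_word (dsc 1 n) n) (pow_word (asc 1 n) n)"
  using assms
proof (induction n rule: dec_induct)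
  case base
  have "dsc 1 1 = []" "asc 1 1 = []" by simp_all
  then show ?case by (simp add: braid_eq.refl)
next
  case (step n)
  have A: "braid_eq (Suc n) (pow_word (asc 1 (Suc n)) n) (pow_word (asc 1 n) n @ dsc 1 (Suc n))"
    using lemA[of n "Suc n"] by simp
  have Ar: "braid_eq (Suc n) (pow_word (dsc 1 (Suc n)) n) (asc 1 (Suc n) @ pow_word (dsc 1 n) n)"
    using be_rev[OF A] by (simp add: rev_pow)
  have "pow_word (asc 1 (Suc n)) (Suc n) = asc 1 (Suc n) @ pow_word (asc 1 (Suc n)) n"
    by (simp add: pow_Suc1)
  also have "braid_eq (Suc n) \<dots> (asc 1 (Suc n) @ (pow_word (asc 1 n) n @ dsc 1 (Suc n)))"
    using A by (intro be_left) (auto intro: valid_asc)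
  also have "braid_eq (Suc n) \<dots> (asc 1 (Suc n) @ (pow_word (dsc 1 n) n @ dsc 1 (Suc n)))"
  proof -
    have "braid_eq (Suc n) (pow_word (asc 1 n) n) (pow_word (dsc 1 n) n)"
      using braid_eq.sym[OF be_mono[OF step.IH, of "Suc n"]] by simp
    then show ?thesis by (meson be_left be_right valid_asc valid_dsc le_refl order.refl)
  qed
  also have "\<dots> = (asc 1 (Suc n) @ pow_word (dsc 1 n) n) @ dsc 1 (Suc n)" by simp
  also have "braid_eq (Suc n) \<dots> (pow_word (dsc 1 (Suc n)) n @ dsc 1 (Suc n))"
    using braid_eq.sym[OF Ar] by (intro be_right) (auto intro: valid_dsc)
  also have "\<dots> = pow_word (dsc 1 (Suc n)) (Suc n)" by (simp add: pow_Suc2)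
  finally show ?case by (rule braid_eq.sym)
qed

lemma part1:
  assumes "0 < a" "a \<le> s" "s \<le> r" "s dvd r" "valid_word a \<gamma>"
  shows "closure r (\<gamma> @ pow_word (full_word r) s) = closure s (\<gamma> @ pow_word (full_word s) r)"
proof -
  obtain m where r: "r = s * m" using assms by blast
  have s1: "1 \<le> s" using assms by simp
  have m1: "1 \<le> m" using assms r by (cases m) auto
  have vg: "valid_word s \<gamma>" using assms valid_mono by blast
  have F: "full_word n = asc 1 n" for n by (simp add: full_word_def asc_def pos_def)
  have "closure r (\<gamma> @ pow_word (asc 1 r) s) = closure r (\<gamma> @ (pow_word (asc 1 s) s @ Eb s r))"
    using lemE[of s r] assms vg s1 by (intro closure_be be_left) (auto intro: valid_mono)
  also have "\<dots> = closure s ((\<gamma> @ pow_word (asc 1 s) s) @ pow_word (dsc 1 s) (r - s))"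
    using lemLS[of s r "\<gamma> @ pow_word (asc 1 s) s"] assms s1 vg by (simp add: valid_pow valid_asc)
  also have "\<dots> = closure s (\<gamma> @ pow_word (asc 1 s) r)"
  proof -
    have rs: "r - s = s * (m - 1)" using r m1 by (simp add: algebra_simps)
    have "braid_eq s (pow_word (pow_word (dsc 1 s) s) (m - 1)) (pow_word (pow_word (asc 1 s) s) (m - 1))"
      using be_pow[OF lemRF[OF s1]] by blast
    then have "braid_eq s ((\<gamma> @ pow_word (asc 1 s) s) @ pow_word (dsc 1 s) (r - s))
         ((\<gamma> @ pow_word (asc 1 s) s) @ pow_word (asc 1 s) (r - s))"
      using rs vg by (intro be_left) (auto simp: pow_mult valid_pow valid_asc)
    moreover have "(\<gamma> @ pow_word (asc 1 s) s) @ pow_word (asc 1 s) (r - s) = \<gamma> @ pow_word (asc 1 s) r"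
      using assms by (simp add: pow_add[symmetric])
    ultimately show ?thesis by (simp add: closure_be)
  qed
  finally show ?thesis by (simp add: F)
qed




lemma sorted_le_last: "sorted xs \<Longrightarrow> x \<in> set xs \<Longrightarrow> x \<le> last xs"
proof (induction xs)
  case Nil then show ?case by simp
next
  case (Cons y ys)
  show ?case
  proof (cases "ys = []")
    case True then show ?thesis using Cons.prems by simp
  next
    case False
    have "last ys \<in> set ys" using False by simp
    then have "y \<le> last ys" using Cons.prems by simp
    then show ?thesis using Cons False by auto
  qed
qed

lemma part2:
  assumes T: "is_T_data (qs @ [(rk, sk)])" and q: "qs \<noteq> [] \<longrightarrow> fst (last qs) \<le> sk"
    and "sk \<le> rk" "sk dvd rk"
  shows "T_link (qs @ [(rk, sk)]) = T_link (qs @ [(sk, rk)])"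
proof -
  define \<gamma> where "\<gamma> = concat (map (\<lambda>(r, s). pow_word (full_word r) s) qs)"
  define a where "a = (if qs = [] then 1 else fst (last qs))"
  have sk0: "0 < sk" using T by (auto simp: is_T_data_def)
  have srt: "sorted (map fst qs)" using T by (auto simp: is_T_data_def sorted_append)
  have r2: "\<forall>(r,s)\<in>set qs. 2 \<le> r" using T by (auto simp: is_T_data_def)
  have a0: "0 < a"
  proof (cases "qs = []")
    case False
    then have "last qs \<in> set qs" by simp
    moreover obtain r s where "last qs = (r,s)" by fastforce
    ultimately have "2 \<le> r" using r2 by fastforce
    then show ?thesis using False \<open>last qs = (r,s)\<close> by (simp add: a_def)
  qed (simp add: a_def)
  have ask: "a \<le> sk" using q sk0 by (auto simp: a_def)
  have vg: "valid_word a \<gamma>"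
    unfolding \<gamma>_def
  proof (intro valid_concat ballI)
    fix w assume "w \<in> set (map (\<lambda>(r, s). pow_word (full_word r) s) qs)"
    then obtain r s where rs: "(r,s) \<in> set qs" "w = pow_word (full_word r) s" by auto
    have ne: "qs \<noteq> []" using rs by auto
    have "r \<le> last (map fst qs)" using srt rs by (intro sorted_le_last) force+
    then have "r \<le> a" using ne by (simp add: a_def last_map)
    moreover have "valid_word r (full_word r)"
      by (simp add: full_word_def valid_word_def)
    ultimately show "valid_word a w" using rs by (auto intro: valid_pow valid_mono)
  qed
  have "T_link (qs @ [(rk, sk)]) = closure rk (\<gamma> @ pow_word (full_word rk) sk)"
    by (simp add: T_link_def \<gamma>_def)
  also have "\<dots> = closure sk (\<gamma> @ pow_word (full_word sk) rk)"
    using part1[OF a0 ask assms(3,4) vg] .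
  also have "\<dots> = T_link (qs @ [(sk, rk)])"
    by (simp add: T_link_def \<gamma>_def)
  finally show ?thesis .
qed

theorem corollary3p2:
  shows "(\<forall>(a::nat) (s::nat) (r::nat) (\<gamma>::bword).
            0 < a \<longrightarrow> a \<le> s \<longrightarrow> s \<le> r \<longrightarrow> s dvd r \<longrightarrow> valid_word a \<gamma> \<longrightarrow>
            closure r (\<gamma> @ pow_word (full_word r) s) = closure s (\<gamma> @ pow_word (full_word s) r))
      \<and> (\<forall>(qs::(nat \<times> nat) list) (rk::nat) (sk::nat).
            is_T_data (qs @ [(rk, sk)]) \<longrightarrow> (qs \<noteq> [] \<longrightarrow> fst (last qs) \<le> sk) \<longrightarrow> sk \<le> rk \<longrightarrow>
            sk dvd rk \<longrightarrow> T_link (qs @ [(rk, sk)]) = T_link (qs @ [(sk, rk)]))"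
  using part1 part2 by blast


end
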